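(* Let $f:[0,\infty)\to(0,\infty)$ be twice continuously differentiable with $(f'(x))^2\le f''(x)f(x)$ for all $x\ge0$, and assume the power series $g(x)=\sum_{n=0}^\infty f(n)x^n$ has positive radius of convergence. Then the reciprocal power series has the form $\frac{1}{g(x)}=\frac{1}{f(0)}\Bigl(1-\sum_{n=1}^\infty b_nx^n\Bigr)$ with $b_n\ge0$ for all $n\ge1$; consequently the kernel $K(z,w)=\sum_{n=0}^\infty f(n)z^n\overline w^n$ is a complete Nevanlinna–Pick kernel.
   Context: A positive definite kernel of the form $K(z,w)=\sum_n a_n(z\overline w)^n$ with $a_0>0$ is a complete Nevanlinna–Pick (CNP) kernel when $1/K(z,w)=\frac{1}{a_0}(1-\sum_{n\ge1}b_n(z\overline w)^n)$ with all $b_n\ge0$ (i.e. $1/K$ has one positive square). *)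

theory Defs
  imports "HOL-Analysis.Analysis" "HOL-Computational_Algebra.Formal_Power_Series"
begin

text \<open>A kernel K(z,w) = sum_n a_n (z conj w)^n with a_0 > 0 is identified with its
  coefficient sequence a. It is a complete Nevanlinna-Pick (CNP) kernel when
  1/K = (1/a_0)(1 - sum_{n>=1} b_n (z conj w)^n) with all b_n >= 0; the reciprocal
  is taken as (formal) power series in the variable z conj w.\<close>

definition cnp_kernel :: "(nat \<Rightarrow> real) \<Rightarrow> bool" where
  "cnp_kernel a \<longleftrightarrow> a 0 > 0 \<and>
     (\<exists>b :: nat \<Rightarrow> real. (\<forall>n\<ge>1. b n \<ge> 0) \<and>
        inverse (Abs_fps a) = fps_const (1 / a 0) * (1 - Abs_fps (\<lambda>n. if n = 0 then 0 else b n)))"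

end

theory Submission
  imports Defs
begin

lemma ratio_mono_analysis:
  fixes f f' f'' :: "real \<Rightarrow> real"
  assumes pos: "\<And>x. x \<ge> 0 \<Longrightarrow> f x > 0"
    and d1: "\<And>x. x \<ge> 0 \<Longrightarrow> (f has_real_derivative f' x) (at x within {0..})"
    and d2: "\<And>x. x \<ge> 0 \<Longrightarrow> (f' has_real_derivative f'' x) (at x within {0..})"
    and ineq: "\<And>x. x \<ge> 0 \<Longrightarrow> (f' x)\<^sup>2 \<le> f'' x * f x"
    and mj: "m \<le> (j::nat)"
  shows "f (real (Suc m)) * f (real j) \<le> f (real (Suc j)) * f (real m)"
proof -
  have dat1: "(f has_real_derivative f' x) (at x)" if "x > 0" for x
  proof -
    have "(f has_real_derivative f' x) (at x within {0<..})"
      by (rule has_field_derivative_subset[OF d1]) (use that in auto)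
    then show ?thesis using at_within_open[of x "{0<..}"] that by auto
  qed
  have dat2: "(f' has_real_derivative f'' x) (at x)" if "x > 0" for x
  proof -
    have "(f' has_real_derivative f'' x) (at x within {0<..})"
      by (rule has_field_derivative_subset[OF d2]) (use that in auto)
    then show ?thesis using at_within_open[of x "{0<..}"] that by auto
  qed
  define q where "q x = f' x / f x" for x
  have dq: "(q has_real_derivative (f'' x * f x - f' x * f' x) / (f x)\<^sup>2) (at x)" if "x > 0" for x
  proof -
    have "f x \<noteq> 0" using pos[of x] that by auto
    then show ?thesis unfolding q_def
      using DERIV_divide[OF dat2[OF that] dat1[OF that]]
      by (simp add: power2_eq_square)
  qed
  have qmono: "q x \<le> q y" if "0 < x" "x \<le> y" for x y
  proof (cases "x = y")
    case False
    then have "x < y" using that by auto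
    have "\<exists>z. x < z \<and> z < y \<and> q y - q x = (y - x) * ((f'' z * f z - f' z * f' z) / (f z)\<^sup>2)"
      by (rule MVT2[OF \<open>x<y\<close>, of q "\<lambda>x. (f'' x * f x - f' x * f' x) / (f x)\<^sup>2"])
        (rule dq, use that in linarith)
    then obtain z where z: "x < z" "z < y" "q y - q x = (y - x) * ((f'' z * f z - f' z * f' z) / (f z)\<^sup>2)"
      by blast
    have "f'' z * f z - f' z * f' z \<ge> 0" using ineq[of z] z that by (simp add: power2_eq_square)
    then have "(y - x) * ((f'' z * f z - f' z * f' z) / (f z)\<^sup>2) \<ge> 0"
      using \<open>x<y\<close> by simp
    then show ?thesis using z by simp
  qed simp
  have contf: "continuous_on {0..} f"
    by (rule DERIV_continuous_on[of _ _ f']) (use d1 in auto)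
  have slope: "\<exists>z. real k < z \<and> z < real k + 1 \<and> ln (f (real k + 1)) - ln (f (real k)) = q z" for k :: nat
  proof -
    have c: "continuous_on {real k..real k + 1} (\<lambda>x. ln (f x))"
      apply (rule continuous_on_ln)
       apply (rule continuous_on_subset[OF contf]) apply auto[1]
      using pos by (auto; smt (verit) of_nat_0_le_iff)
    have dl: "((\<lambda>x. ln (f x)) has_real_derivative q x) (at x)" if "x > 0" for x
      unfolding q_def
      using DERIV_ln_divide[OF pos] dat1 that
      by (auto intro!: derivative_eq_intros dat1 simp: pos)
    have "real k < real k + 1" by simp
    from MVT[OF this c] obtain l z where lz: "real k < z" "z < real k + 1"
      "DERIV (\<lambda>x. ln (f x)) z :> l" "ln (f (real k + 1)) - ln (f (real k)) = (real k + 1 - real k) * l"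
      using dl real_differentiable_def
      by (smt (verit, ccfv_threshold) of_nat_0_le_iff)
    have "l = q z" using DERIV_unique[OF lz(3) dl] lz(1) by (smt (verit) of_nat_0_le_iff)
    then show ?thesis using lz by auto
  qed
  obtain z1 where z1: "real m < z1" "z1 < real m + 1" "ln (f (real m + 1)) - ln (f (real m)) = q z1"
    using slope by blast
  obtain z2 where z2: "real j < z2" "z2 < real j + 1" "ln (f (real j + 1)) - ln (f (real j)) = q z2"
    using slope by blast
  have "ln (f (real m + 1)) - ln (f (real m)) \<le> ln (f (real j + 1)) - ln (f (real j))"
  proof (cases "m = j")
    case False
    then have "real m + 1 \<le> real j" using mj by simp
    then have "q z1 \<le> q z2" using z1 z2 by (intro qmono) auto
    then show ?thesis using z1 z2 by simp
  qed simp
  then have "ln (f (real m + 1) * f (real j)) \<le> ln (f (real j + 1) * f (real m))"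
  proof -
    have "f (real m + 1) > 0" "f (real j) > 0" "f (real j + 1) > 0" "f (real m) > 0"
      using pos by auto
    then show ?thesis using \<open>ln (f (real m + 1)) - ln (f (real m)) \<le> _\<close> by (simp add: ln_mult)
  qed
  then have "f (real m + 1) * f (real j) \<le> f (real j + 1) * f (real m)"
    using pos by (subst (asm) ln_le_cancel_iff) (auto intro: mult_pos_pos)
  then show ?thesis by (simp add: add.commute)
qed

lemma kaluza:
  fixes a :: "nat \<Rightarrow> real"
  assumes apos: "\<And>n. a n > 0"
    and rat: "\<And>m j. m \<le> j \<Longrightarrow> a (Suc m) * a j \<le> a (Suc j) * a m"
  shows "\<exists>b :: nat \<Rightarrow> real. (\<forall>n\<ge>1. b n \<ge> 0) \<and>
            inverse (Abs_fps a) = fps_const (1 / a 0) * (1 - Abs_fps (\<lambda>n. if n = 0 then 0 else b n))"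
proof -
  define c where "c n = fps_nth (inverse (Abs_fps a)) n" for n
  define b where "b n = - a 0 * c n" for n
  have a0: "a 0 \<noteq> 0" using apos[of 0] by simp
  have c0: "c 0 = 1 / a 0" unfolding c_def by (simp add: field_simps)
  have inv1: "inverse (Abs_fps a) * Abs_fps a = 1"
    by (rule inverse_mult_eq_1) (simp add: a0)
  have rec: "a n = (\<Sum>k=1..n. b k * a (n - k))" if "n \<ge> 1" for n
  proof -
    have "0 = fps_nth (inverse (Abs_fps a) * Abs_fps a) n" using that by (simp add: inv1)
    also have "\<dots> = (\<Sum>i=0..n. c i * a (n - i))" by (simp add: fps_mult_nth c_def)
    also have "\<dots> = c 0 * a n + (\<Sum>i=1..n. c i * a (n - i))"
      by (simp add: sum.atLeast_Suc_atMost)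
    finally have "0 = a 0 * (c 0 * a n + (\<Sum>i=1..n. c i * a (n - i)))" by simp
    also have "\<dots> = a n - (\<Sum>i=1..n. b i * a (n - i))"
      using a0 by (simp add: c0 b_def sum_distrib_left sum_negf algebra_simps)
    finally show ?thesis by simp
  qed
  have bnn: "\<forall>k. 1 \<le> k \<and> k \<le> n \<longrightarrow> b k \<ge> 0" for n
  proof (induction n)
    case 0 then show ?case by simp
  next
    case (Suc n)
    show ?case
    proof (cases "n = 0")
      case True
      have "a 1 = b 1 * a 0" using rec[of 1] by simp
      then have "b 1 = a 1 / a 0" using a0 by (simp add: field_simps)
      then have "b 1 \<ge> 0" using apos[of 1] apos[of 0] by simp
      then show ?thesis using True by (auto simp: le_Suc_eq)
    next
      case False
      then have n1: "n \<ge> 1" by simp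
      have r1: "a (Suc n) = b (Suc n) * a 0 + (\<Sum>k=1..n. b k * a (Suc n - k))"
        using rec[of "Suc n"] by (simp add: add.commute)
      have r0: "a n = (\<Sum>k=1..n. b k * a (n - k))" using rec n1 by simp
      have "a 0 * a n * b (Suc n) = a n * a (Suc n) - a n * (\<Sum>k=1..n. b k * a (Suc n - k))"
        using r1 by (simp add: algebra_simps)
      also have "\<dots> = a (Suc n) * (\<Sum>k=1..n. b k * a (n - k)) - a n * (\<Sum>k=1..n. b k * a (Suc n - k))"
        by (subst r0[symmetric]) (simp add: mult.commute)
      also have "\<dots> = (\<Sum>k=1..n. b k * (a (Suc n) * a (n - k) - a n * a (Suc n - k)))"
        by (simp add: sum_distrib_left sum_subtractf[symmetric] algebra_simps)
      also have "\<dots> \<ge> 0"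
      proof (rule sum_nonneg)
        fix k assume k: "k \<in> {1..n}"
        have "b k \<ge> 0" using Suc.IH k by auto
        moreover have "a (Suc (n - k)) * a n \<le> a (Suc n) * a (n - k)"
          using rat[of "n - k" n] by simp
        moreover have "Suc n - k = Suc (n - k)" using k by auto
        ultimately show "b k * (a (Suc n) * a (n - k) - a n * a (Suc n - k)) \<ge> 0"
          by (simp add: mult.commute)
      qed
      finally have "0 \<le> (a 0 * a n) * b (Suc n)" by simp
      moreover have "a 0 * a n > 0" using apos by simp
      ultimately have "b (Suc n) \<ge> 0" by (simp add: zero_le_mult_iff)
      then show ?thesis using Suc.IH by (auto simp: le_Suc_eq)
    qed
  qed
  have "inverse (Abs_fps a) = fps_const (1 / a 0) * (1 - Abs_fps (\<lambda>n. if n = 0 then 0 else b n))"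
  proof (rule fps_ext)
    fix n
    show "fps_nth (inverse (Abs_fps a)) n = fps_nth (fps_const (1 / a 0) * (1 - Abs_fps (\<lambda>n. if n = 0 then 0 else b n))) n"
      using a0 by (cases "n = 0") (auto simp: b_def c_def field_simps)
  qed
  then show ?thesis using bnn by blast
qed

theorem theorem9p6:
  fixes f f' f'' :: "real \<Rightarrow> real"
  assumes pos: "\<And>x. x \<ge> 0 \<Longrightarrow> f x > 0"
    and d1: "\<And>x. x \<ge> 0 \<Longrightarrow> (f has_real_derivative f' x) (at x within {0..})"
    and d2: "\<And>x. x \<ge> 0 \<Longrightarrow> (f' has_real_derivative f'' x) (at x within {0..})"
    and cont2: "continuous_on {0..} f''"
    and ineq: "\<And>x. x \<ge> 0 \<Longrightarrow> (f' x)\<^sup>2 \<le> f'' x * f x"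
    and rad: "fps_conv_radius (Abs_fps (\<lambda>n. f (real n))) > 0"
  shows "(\<exists>b :: nat \<Rightarrow> real. (\<forall>n\<ge>1. b n \<ge> 0) \<and>
            inverse (Abs_fps (\<lambda>n. f (real n))) =
              fps_const (1 / f 0) * (1 - Abs_fps (\<lambda>n. if n = 0 then 0 else b n)))
         \<and> cnp_kernel (\<lambda>n. f (real n))"
proof -
  have rat: "f (real (Suc m)) * f (real j) \<le> f (real (Suc j)) * f (real m)" if "m \<le> j" for m j
    by (rule ratio_mono_analysis[OF pos d1 d2 ineq that])
  have ex: "\<exists>b :: nat \<Rightarrow> real. (\<forall>n\<ge>1. b n \<ge> 0) \<and>
            inverse (Abs_fps (\<lambda>n. f (real n))) =
              fps_const (1 / f 0) * (1 - Abs_fps (\<lambda>n. if n = 0 then 0 else b n))"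
    using kaluza[of "\<lambda>n. f (real n)"] pos rat by simp
  then show ?thesis using pos[of 0] unfolding cnp_kernel_def by simp
qed

end
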